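(* For any constant $T_1>0$, there exists a unique $f\in L_1[0,T_1]$ such that \[w_-(e^{-T_1+t})+\int_t^{T_1}w_-(e^{-s+t})f(s)\,ds=1\quad\forall t\in[0,T_1].\]
   Context: $w_-:[0,1]\to[0,1]$ is strictly increasing, thrice differentiable, with $w_-(0)=0$, $w_-(1)=1$, $w_-'(0)>1$, $w_-'(1)>1$, $w_-'''>0$. *)

theory Defs
  imports "HOL-Analysis.Analysis"
begin

end

theory Submission
  imports Defs "HOL-Analysis.Analysis"
begin
lemma ind_Icc: "indicator {a..b} x = (if a \<le> x \<and> x \<le> (b::real) then 1 else (0::real))"
  by (auto simp: indicator_def)

lemma ae_zero_of_Ioi:
  fixes r :: "real \<Rightarrow> real"
  assumes ri: "integrable lborel r" and z: "\<And>x. (LINT u|lborel. indicator {x<..} u * r u) = 0"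
  shows "AE u in lborel. r u = 0"
proof -
  have rm[measurable]: "r \<in> borel_measurable borel" using borel_measurable_integrable[OF ri] by simp
  define p where "p u = max 0 (r u)" for u
  define q where "q u = max 0 (- r u)" for u
  have pm[measurable]: "p \<in> borel_measurable borel" unfolding p_def by measurable
  have qm[measurable]: "q \<in> borel_measurable borel" unfolding q_def by measurable
  have pi: "integrable lborel p" unfolding p_def using ri by auto
  have qi: "integrable lborel q" unfolding q_def using ri by auto
  have pix: "integrable lborel (\<lambda>u. indicator A u * p u)" if "A \<in> sets borel" for A
    using integrable_mult_indicator[OF _ pi, of A] that by simp
  have qix: "integrable lborel (\<lambda>u. indicator A u * q u)" if "A \<in> sets borel" for A
    using integrable_mult_indicator[OF _ qi, of A] that by simp
  have rpq: "r u = p u - q u" for u unfolding p_def q_def by auto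
  have em: "emeasure (density lborel (\<lambda>u. ennreal (p u))) {x<..} = ennreal (LINT u|lborel. indicator {x<..} u * p u)" for x
  proof -
    have "emeasure (density lborel (\<lambda>u. ennreal (p u))) {x<..} = (\<integral>\<^sup>+ u. ennreal (p u) * indicator {x<..} u \<partial>lborel)"
      by (rule emeasure_density) auto
    also have "\<dots> = (\<integral>\<^sup>+ u. ennreal (indicator {x<..} u * p u) \<partial>lborel)"
      by (intro nn_integral_cong) (auto simp: indicator_def)
    also have "\<dots> = ennreal (LINT u|lborel. indicator {x<..} u * p u)"
      by (rule nn_integral_eq_integral[OF pix]) (auto simp: p_def)
    finally show ?thesis .
  qed
  have en: "emeasure (density lborel (\<lambda>u. ennreal (q u))) {x<..} = ennreal (LINT u|lborel. indicator {x<..} u * q u)" for x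
  proof -
    have "emeasure (density lborel (\<lambda>u. ennreal (q u))) {x<..} = (\<integral>\<^sup>+ u. ennreal (q u) * indicator {x<..} u \<partial>lborel)"
      by (rule emeasure_density) auto
    also have "\<dots> = (\<integral>\<^sup>+ u. ennreal (indicator {x<..} u * q u) \<partial>lborel)"
      by (intro nn_integral_cong) (auto simp: indicator_def)
    also have "\<dots> = ennreal (LINT u|lborel. indicator {x<..} u * q u)"
      by (rule nn_integral_eq_integral[OF qix]) (auto simp: q_def)
    finally show ?thesis .
  qed
  have pq: "(LINT u|lborel. indicator {x<..} u * p u) = (LINT u|lborel. indicator {x<..} u * q u)" for x
  proof -
    have "(LINT u|lborel. indicator {x<..} u * p u) - (LINT u|lborel. indicator {x<..} u * q u)
        = (LINT u|lborel. indicator {x<..} u * p u - indicator {x<..} u * q u)"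
      using pix qix by simp
    also have "\<dots> = (LINT u|lborel. indicator {x<..} u * r u)"
      by (simp add: rpq right_diff_distrib)
    finally show ?thesis using z[of x] by simp
  qed
  have MN: "density lborel (\<lambda>u. ennreal (p u)) = density lborel (\<lambda>u. ennreal (q u))"
    by (rule measure_eqI_lessThan) (auto simp: em en pq)
  have "AE u in lborel. ennreal (p u) = ennreal (q u)"
  proof (rule finite_density_unique[THEN iffD1, OF _ _ _ _ _ MN])
    show "(\<integral>\<^sup>+ u. ennreal (p u) \<partial>lborel) \<noteq> \<infinity>"
      using nn_integral_eq_integral[OF pi] by (auto simp: p_def)
  qed auto
  then show ?thesis
    by eventually_elim (auto simp: p_def q_def)
qed

lemma ae_zero_of_intervals:
  fixes \<rho> :: "real \<Rightarrow> real"
  assumes [measurable]: "\<rho> \<in> borel_measurable borel" and \<rho>i: "set_integrable lborel {0..T} \<rho>"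
    and z: "\<And>t. t \<in> {0..T} \<Longrightarrow> (LINT u:{t..T}|lborel. \<rho> u) = 0" and T0: "0 \<le> T"
  shows "AE u in lborel. u \<in> {0..T} \<longrightarrow> \<rho> u = 0"
proof -
  define r where "r u = indicator {0..T} u * \<rho> u" for u
  have ri: "integrable lborel r" using \<rho>i unfolding set_integrable_def r_def by simp
  have "(LINT u|lborel. indicator {x<..} u * r u) = 0" for x
  proof (cases "x \<le> T")
    case False
    then have "(\<lambda>u. indicator {x<..} u * r u) = (\<lambda>_. 0::real)" unfolding r_def by (auto simp: indicator_def)
    then show ?thesis by simp
  next
    case True
    define t where "t = max x 0"
    have "(LINT u|lborel. indicator {x<..} u * r u) = (LINT u|lborel. indicator {t..T} u *\<^sub>R \<rho> u)"
    proof (rule integral_cong_AE)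
      show "AE u in lborel. indicator {x<..} u * r u = indicator {t..T} u *\<^sub>R \<rho> u"
        using AE_lborel_singleton[of x]
        by eventually_elim (auto simp: r_def t_def indicator_def)
    qed (auto simp: r_def ind_Icc)
    also have "\<dots> = 0" using z[of t] True T0 unfolding t_def set_lebesgue_integral_def by auto
    finally show ?thesis .
  qed
  then have "AE u in lborel. r u = 0" by (intro ae_zero_of_Ioi[OF ri])
  then show ?thesis by eventually_elim (auto simp: r_def)
qed

lemma bdd_set_integrable:
  fixes g :: "real \<Rightarrow> real"
  assumes [measurable]: "g \<in> borel_measurable borel" and b: "\<And>x. x \<in> {a..b} \<Longrightarrow> \<bar>g x\<bar> \<le> M"
  shows "set_integrable lborel {a..b} g"
proof (rule set_integrable_bound[where f="\<lambda>_. M"])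
  show "set_integrable lborel {a..b} (\<lambda>_. M)"
    by (rule borel_integrable_atLeastAtMost') auto
  show "set_borel_measurable lborel {a..b} g"
    unfolding set_borel_measurable_def by measurable
  show "AE x in lborel. x \<in> {a..b} \<longrightarrow> norm (g x) \<le> norm M"
  proof (intro AE_I2 impI)
    fix x assume "x \<in> {a..b}"
    then show "norm (g x) \<le> norm M" using b[of x] abs_ge_self[of M] by simp
  qed
qed

lemma gronwall_ae:
  fixes h :: "real \<Rightarrow> real" and B T :: real
  assumes hm[measurable]: "h \<in> borel_measurable borel" and hi: "set_integrable lborel {0..T} h"
    and B: "B > 0" and T0: "0 \<le> T"
    and bnd: "AE u in lborel. u \<in> {0..T} \<longrightarrow> \<bar>h u\<bar> \<le> B * (LINT s:{u..T}|lborel. \<bar>h s\<bar>)"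
  shows "AE u in lborel. u \<in> {0..T} \<longrightarrow> h u = 0"
proof -
  define \<phi> where "\<phi> u = (LINT s:{u..T}|lborel. \<bar>h s\<bar>)" for u
  have \<phi>m[measurable]: "\<phi> \<in> borel_measurable borel"
    unfolding \<phi>_def set_lebesgue_integral_def ind_Icc by measurable
  have ahi: "set_integrable lborel {0..T} (\<lambda>s. \<bar>h s\<bar>)" by (rule set_integrable_abs[OF hi])
  have ahi': "set_integrable lborel {u..T} (\<lambda>s. \<bar>h s\<bar>)" if "u \<in> {0..T}" for u
    by (rule set_integrable_subset[OF ahi]) (use that in auto)
  have ahi0: "integrable lborel (\<lambda>s. indicator {0..T} s * \<bar>h s\<bar>)"
    using ahi unfolding set_integrable_def by simp
  have \<phi>_nonneg: "0 \<le> \<phi> u" for u unfolding \<phi>_def set_lebesgue_integral_def by simp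
  have \<phi>_anti: "\<phi> u \<le> \<phi> t" if "0 \<le> t" "t \<le> u" for t u
    unfolding \<phi>_def set_lebesgue_integral_def
  proof (rule integral_mono)
    show "integrable lborel (\<lambda>x. indicator {t..T} x *\<^sub>R \<bar>h x\<bar>)"
      using ahi'[of t] that unfolding set_integrable_def
      by (cases "t \<le> T") (auto simp: indicator_def)
    show "integrable lborel (\<lambda>x. indicator {u..T} x *\<^sub>R \<bar>h x\<bar>)"
      using ahi'[of u] that unfolding set_integrable_def
      by (cases "u \<le> T") (auto simp: indicator_def)
  qed (use that in \<open>auto simp: indicator_def\<close>)
  have \<phi>T: "\<phi> T = 0"
  proof -
    show ?thesis unfolding \<phi>_def set_lebesgue_integral_def
      by (rule integral_eq_zero_AE) (use AE_lborel_singleton[of T] in \<open>auto simp: ind_Icc\<close>)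
  qed
  have \<phi>i: "set_integrable lborel {t..T} \<phi>" if "t \<in> {0..T}" for t
    by (rule bdd_set_integrable[where M="\<phi> 0"]) (use that \<phi>_anti \<phi>_nonneg in auto)
  have main: "\<phi> t \<le> B * (LINT u:{t..T}|lborel. \<phi> u)" if t: "t \<in> {0..T}" for t
  proof -
    have "\<phi> t \<le> (LINT u:{t..T}|lborel. B * \<phi> u)" unfolding \<phi>_def[of t]
    proof (rule set_integral_mono_AE)
      show "set_integrable lborel {t..T} (\<lambda>s. \<bar>h s\<bar>)" by (rule ahi'[OF t])
      show "set_integrable lborel {t..T} (\<lambda>u. B * \<phi> u)" using \<phi>i[OF t] by simp
      show "AE x\<in>{t..T} in lborel. \<bar>h x\<bar> \<le> B * \<phi> x"
        using bnd by eventually_elim (use t in \<open>auto simp: \<phi>_def\<close>)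
    qed
    then show ?thesis by simp
  qed
  define \<delta> where "\<delta> = 1 / (2 * B)"
  have \<delta>: "\<delta> > 0" "B * \<delta> = 1/2" unfolding \<delta>_def using B by auto
  have P: "\<forall>t\<in>{0..T}. T - real n * \<delta> \<le> t \<longrightarrow> \<phi> t = 0" for n
  proof (induction n)
    case 0
    then show ?case using \<phi>T by auto
  next
    case (Suc n)
    show ?case
    proof (intro ballI impI)
      fix t assume t: "t \<in> {0..T}" and tn: "T - real (Suc n) * \<delta> \<le> t"
      define t1 where "t1 = max t (T - real n * \<delta>)"
      have t1: "t \<le> t1" "t1 \<le> T" "t1 - t \<le> \<delta>" using t tn \<delta> unfolding t1_def
        by (auto simp: algebra_simps)
      have "(LINT u:{t..T}|lborel. \<phi> u) \<le> (LINT u:{t..T}|lborel. \<phi> t * indicator {t..t1} u)"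
      proof (rule set_integral_mono)
        show "set_integrable lborel {t..T} \<phi>" by (rule \<phi>i[OF t])
        show "set_integrable lborel {t..T} (\<lambda>u. \<phi> t * indicator {t..t1} u)"
          by (rule bdd_set_integrable[where M="\<phi> t"]) (auto simp: indicator_def \<phi>_nonneg)
        fix u assume u: "u \<in> {t..T}"
        show "\<phi> u \<le> \<phi> t * indicator {t..t1} u"
        proof (cases "u \<le> t1")
          case True then show ?thesis using u t \<phi>_anti[of t u] by (auto simp: indicator_def)
        next
          case False
          then have "\<phi> u = 0" using Suc.IH u t unfolding t1_def by auto
          then show ?thesis using \<phi>_nonneg[of t] by (auto simp: indicator_def)
        qed
      qed
      also have "\<dots> = \<phi> t * (t1 - t)"
      proof -
        have "(\<lambda>u. indicator {t..T} u *\<^sub>R (\<phi> t * indicator {t..t1} u)) = (\<lambda>u. \<phi> t * indicator {t..t1} u)"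
          using t1 by (auto simp: indicator_def)
        then show ?thesis unfolding set_lebesgue_integral_def using t1 by simp
      qed
      finally have "\<phi> t \<le> B * (\<phi> t * (t1 - t))"
        using main[OF t] B by (smt (verit) mult_left_mono)
      also have "\<dots> \<le> B * (\<phi> t * \<delta>)"
        using t1 B \<phi>_nonneg[of t] by (intro mult_left_mono) auto
      also have "\<dots> = \<phi> t / 2" using \<delta> by (simp add: algebra_simps)
      finally show "\<phi> t = 0" using \<phi>_nonneg[of t] by simp
    qed
  qed
  obtain n where n: "T < real n * \<delta>" using reals_Archimedean3[OF \<delta>(1)] by blast
  have "\<phi> 0 = 0" using P[of n] n T0 by auto
  then have "integral\<^sup>L lborel (\<lambda>s. indicator {0..T} s * \<bar>h s\<bar>) = 0"
    unfolding \<phi>_def set_lebesgue_integral_def by simp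
  then have "AE s in lborel. indicator {0..T} s * \<bar>h s\<bar> = 0"
    using integral_nonneg_eq_0_iff_AE[OF ahi0] by simp
  then show ?thesis by eventually_elim (auto simp: indicator_def)
qed


locale volt =
  fixes w w1 :: "real \<Rightarrow> real" and T :: real
  assumes Tpos: "T > 0"
    and w1c: "continuous_on {0..1} w1"
    and dw: "\<And>x. x \<in> {0..1} \<Longrightarrow> (w has_real_derivative w1 x) (at x within {0..1})"
    and w_one: "w 1 = 1"
begin

definition W1 :: "real \<Rightarrow> real" where "W1 x = w1 (max 0 (min 1 x))"
definition K :: "real \<Rightarrow> real \<Rightarrow> real" where "K u s = W1 (exp (u - s)) * exp (u - s)"

lemma W1_cont: "continuous_on UNIV W1"
  unfolding W1_def
  by (rule continuous_on_compose2[OF w1c]) (auto intro!: continuous_intros)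

lemma W1_meas[measurable]: "W1 \<in> borel_measurable borel"
  by (rule borel_measurable_continuous_onI[OF W1_cont])

lemma K_meas[measurable (raw)]:
  assumes [measurable]: "f \<in> borel_measurable M" "g \<in> borel_measurable M"
  shows "(\<lambda>x. K (f x) (g x)) \<in> borel_measurable M"
  unfolding K_def by measurable

lemma K_eq: "u \<le> s \<Longrightarrow> K u s = w1 (exp (u - s)) * exp (u - s)"
  unfolding K_def W1_def by auto

lemma W1_bound: "\<exists>B>0. \<forall>x. \<bar>W1 x\<bar> \<le> B"
proof -
  have "compact (w1 ` {0..1})" by (rule compact_continuous_image[OF w1c]) auto
  then obtain B where B: "B > 0" "\<And>y. y \<in> w1 ` {0..1} \<Longrightarrow> norm y \<le> B"
    using compact_imp_bounded bounded_pos by metis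
  have "\<bar>W1 x\<bar> \<le> B" for x using B(2)[of "W1 x"] unfolding W1_def by auto
  then show ?thesis using B(1) by blast
qed

lemma K_bound: "\<exists>B>0. \<forall>u s. u \<le> s \<longrightarrow> \<bar>K u s\<bar> \<le> B"
proof -
  obtain B where B: "B > 0" "\<And>x. \<bar>W1 x\<bar> \<le> B" using W1_bound by blast
  have "\<bar>K u s\<bar> \<le> B" if "u \<le> s" for u s
  proof -
    have "exp (u - s) \<le> 1" using that by simp
    then have "\<bar>K u s\<bar> \<le> B * 1" unfolding K_def abs_mult
      by (intro mult_mono) (use B in auto)
    then show ?thesis by simp
  qed
  then show ?thesis using B(1) by blast
qed

definition V :: "(real \<Rightarrow> real) \<Rightarrow> real \<Rightarrow> real" where
  "V f u = (LINT s:{u..T}|lborel. K u s * f s)"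

lemma V_meas[measurable]:
  assumes [measurable]: "f \<in> borel_measurable borel"
  shows "V f \<in> borel_measurable borel"
  unfolding V_def set_lebesgue_integral_def ind_Icc
  by measurable


lemma Kf_int:
  assumes [measurable]: "f \<in> borel_measurable borel" and fi: "set_integrable lborel {u..T} f"
  shows "set_integrable lborel {u..T} (\<lambda>s. K u s * f s)"
proof -
  obtain B where B: "B > 0" "\<And>u s. u \<le> s \<Longrightarrow> \<bar>K u s\<bar> \<le> B" using K_bound by blast
  show ?thesis
  proof (rule set_integrable_bound[where f="\<lambda>s. B * f s"])
    show "set_integrable lborel {u..T} (\<lambda>s. B * f s)" using fi by simp
    show "set_borel_measurable lborel {u..T} (\<lambda>s. K u s * f s)"
      unfolding set_borel_measurable_def by measurable
    show "AE x in lborel. x \<in> {u..T} \<longrightarrow> norm (K u x * f x) \<le> norm (B * f x)"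
    proof (intro AE_I2 impI)
      fix x assume "x \<in> {u..T}"
      then have "\<bar>K u x\<bar> \<le> B" using B by auto
      then show "norm (K u x * f x) \<le> norm (B * f x)" using B
        by (auto simp: abs_mult intro!: mult_right_mono)
    qed
  qed
qed

lemma V_diff:
  assumes [measurable]: "f \<in> borel_measurable borel" "g \<in> borel_measurable borel"
    and fi: "set_integrable lborel {u..T} f" and gi: "set_integrable lborel {u..T} g"
  shows "V f u - V g u = V (\<lambda>s. f s - g s) u"
  unfolding V_def
  using set_integral_diff(2)[OF Kf_int[OF _ fi] Kf_int[OF _ gi]] by (simp add: right_diff_distrib)

lemma V_bound:
  assumes [measurable]: "f \<in> borel_measurable borel"
    and gi: "set_integrable lborel {u..T} g" and b: "\<And>s. s \<in> {u..T} \<Longrightarrow> \<bar>f s\<bar> \<le> g s"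
    and B: "B \<ge> 0" "\<And>u s. u \<le> s \<Longrightarrow> \<bar>K u s\<bar> \<le> B"
  shows "\<bar>V f u\<bar> \<le> B * (LINT s:{u..T}|lborel. g s)"
proof -
  have fi: "set_integrable lborel {u..T} f"
  proof (rule set_integrable_bound[OF gi])
    show "set_borel_measurable lborel {u..T} f" unfolding set_borel_measurable_def by measurable
    show "AE x in lborel. x \<in> {u..T} \<longrightarrow> norm (f x) \<le> norm (g x)"
      using b by (auto intro!: AE_I2 order_trans[OF _ abs_ge_self])
  qed
  have "\<bar>V f u\<bar> \<le> (LINT s:{u..T}|lborel. norm (K u s * f s))"
    unfolding V_def using set_integral_norm_bound[OF Kf_int[OF _ fi]] by simp
  also have "\<dots> \<le> (LINT s:{u..T}|lborel. B * g s)"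
  proof (rule set_integral_mono)
    show "set_integrable lborel {u..T} (\<lambda>s. norm (K u s * f s))"
      using set_integrable_abs[OF Kf_int[OF _ fi]] by simp
    show "set_integrable lborel {u..T} (\<lambda>s. B * g s)" using gi by simp
    fix s assume s: "s \<in> {u..T}"
    then have "\<bar>K u s\<bar> \<le> B" using B by auto
    then show "norm (K u s * f s) \<le> B * g s"
      using b[OF s] B by (auto simp: abs_mult intro!: mult_mono)
  qed
  also have "\<dots> = B * (LINT s:{u..T}|lborel. g s)" by simp
  finally show ?thesis .
qed

lemma exp_int:
  assumes "u \<le> T" "c > 0"
  shows "(LINT s:{u..T}|lborel. exp (c * (T - s))) = (exp (c * (T - u)) - 1) / c"
proof -
  have "(LINT s:{u..T}|lborel. exp (c * (T - s))) = (- exp (c * (T - T)) / c) - (- exp (c * (T - u)) / c)"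
    unfolding set_lebesgue_integral_def
  proof (rule integral_FTC_atLeastAtMost[OF assms(1)])
    fix x
    show "((\<lambda>s. - exp (c * (T - s)) / c) has_vector_derivative exp (c * (T - x))) (at x within {u..T})"
      unfolding has_real_derivative_iff_has_vector_derivative[symmetric]
      using assms by (auto intro!: derivative_eq_intros)
  qed (auto intro!: continuous_intros)
  then show ?thesis using assms by (simp add: field_simps)
qed

lemma w_ftc:
  assumes "t \<le> s"
  shows "w (exp (t - s)) = 1 - (LINT u:{t..s}|lborel. K u s)"
proof -
  have "(LINT u:{t..s}|lborel. K u s) = w (exp (s - s)) - w (exp (t - s))"
    unfolding set_lebesgue_integral_def
  proof (rule integral_FTC_atLeastAtMost[OF assms])
    fix u assume u: "t \<le> u" "u \<le> s"
    have e: "exp (u - s) \<in> {0..1}" using u by auto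
    have "((w \<circ> (\<lambda>u. exp (u - s))) has_real_derivative w1 (exp (u - s)) * exp (u - s)) (at u within {t..s})"
    proof (rule DERIV_image_chain)
      show "(w has_real_derivative w1 (exp (u - s))) (at (exp (u - s)) within (\<lambda>u. exp (u - s)) ` {t..s})"
        by (rule has_field_derivative_subset[OF dw[OF e]]) auto
      show "((\<lambda>u. exp (u - s)) has_real_derivative exp (u - s)) (at u within {t..s})"
        by (auto intro!: derivative_eq_intros)
    qed
    then show "((\<lambda>u. w (exp (u - s))) has_vector_derivative K u s) (at u within {t..s})"
      using u by (simp add: K_eq has_real_derivative_iff_has_vector_derivative o_def)
  next
    show "continuous_on {t..s} (\<lambda>u. K u s)" unfolding K_def
      by (auto intro!: continuous_intros continuous_on_compose2[OF W1_cont])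
  qed
  then show ?thesis using w_one by simp
qed

lemma key:
  fixes f :: "real \<Rightarrow> real"
  assumes fm[measurable]: "f \<in> borel_measurable borel"
    and fi: "set_integrable lborel {0..T} f" and t: "t \<in> {0..T}"
  shows "set_integrable lborel {t..T} (V f)"
    and "w (exp (- T + t)) + (LINT s:{t..T}|lborel. w (exp (- s + t)) * f s)
       = 1 + (LINT u:{t..T}|lborel. f u - K u T - V f u)"
proof -
  obtain B where B: "B > 0" "\<And>u s. u \<le> s \<Longrightarrow> \<bar>K u s\<bar> \<le> B" using K_bound by blast
  define g0 where "g0 s = indicator {0..T} s * \<bar>f s\<bar>" for s
  have g0i: "integrable lborel g0"
    using set_integrable_abs[OF fi] unfolding set_integrable_def g0_def by simp
  define C0 where "C0 = integral\<^sup>L lborel g0"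
  define F where "F u s = indicator {t..T} u * indicator {u..T} s * K u s * f s" for u s
  have F_meas[measurable]: "(\<lambda>(u, s). F u s) \<in> borel_measurable (lborel \<Otimes>\<^sub>M lborel)"
    unfolding F_def ind_Icc by measurable
  have Fb: "\<bar>F u s\<bar> \<le> indicator {t..T} u * (B * g0 s)" for u s
  proof (cases "t \<le> u \<and> u \<le> T \<and> u \<le> s \<and> s \<le> T")
    case True
    then have "\<bar>K u s\<bar> \<le> B" using B by auto
    then have "\<bar>K u s\<bar> * \<bar>f s\<bar> \<le> B * \<bar>f s\<bar>" by (intro mult_right_mono) auto
    then show ?thesis using True t unfolding F_def g0_def by (auto simp: indicator_def abs_mult)
  next
    case False
    then show ?thesis unfolding F_def g0_def using B by (auto simp: indicator_def)
  qed
  have Fui: "integrable lborel (\<lambda>s. F u s)" for u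
    by (rule Bochner_Integration.integrable_bound[where f="\<lambda>s. indicator {t..T} u * (B * g0 s)"])
       (use g0i Fb in \<open>auto intro!: AE_I2 order_trans[OF _ abs_ge_self]\<close>)
  have Fint: "integrable (lborel \<Otimes>\<^sub>M lborel) (\<lambda>(u, s). F u s)"
  proof (rule lborel_pair.Fubini_integrable)
    show "AE x in lborel. integrable lborel (\<lambda>y. case (x, y) of (u, s) \<Rightarrow> F u s)"
      using Fui by auto
    have ib: "integrable lborel (\<lambda>u. indicator {t..T} u * (B * C0))"
      using borel_integrable_atLeastAtMost'[of t T "\<lambda>_. B * C0"]
      unfolding set_integrable_def by simp
    show "integrable lborel (\<lambda>x. LINT y|lborel. norm (case (x, y) of (u, s) \<Rightarrow> F u s))"
    proof (rule Bochner_Integration.integrable_bound[OF ib])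
      show "(\<lambda>x. LINT y|lborel. norm (case (x, y) of (u, s) \<Rightarrow> F u s)) \<in> borel_measurable lborel"
        by measurable
      show "AE x in lborel. norm (LINT y|lborel. norm (case (x, y) of (u, s) \<Rightarrow> F u s))
                \<le> norm (indicator {t..T} x * (B * C0))"
      proof (intro AE_I2)
        fix u
        have "(LINT s|lborel. \<bar>F u s\<bar>) \<le> (LINT s|lborel. indicator {t..T} u * (B * g0 s))"
          by (intro integral_mono Fb) (use Fui g0i in auto)
        also have "\<dots> = indicator {t..T} u * (B * C0)" unfolding C0_def by simp
        finally have "(LINT s|lborel. \<bar>F u s\<bar>) \<le> indicator {t..T} u * (B * C0)" .
        moreover have "0 \<le> (LINT s|lborel. \<bar>F u s\<bar>)" by simp
        ultimately show "norm (LINT y|lborel. norm (case (u, y) of (u, s) \<Rightarrow> F u s))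
                \<le> norm (indicator {t..T} u * (B * C0))" by simp
      qed
    qed
  qed simp
  define I where "I s = (LINT u:{t..s}|lborel. K u s)" for s
  have inner_u: "(LINT u|lborel. F u s) = indicator {t..T} s * (I s * f s)" for s
  proof -
    have "F u s = (indicator {t..T} s * f s) * (indicator {t..s} u *\<^sub>R K u s)" for u
      unfolding F_def by (auto simp: indicator_def)
    then show ?thesis unfolding I_def set_lebesgue_integral_def by simp
  qed
  have inner_s: "(LINT s|lborel. F u s) = indicator {t..T} u * V f u" for u
  proof -
    have "F u s = indicator {t..T} u * (indicator {u..T} s *\<^sub>R (K u s * f s))" for s
      unfolding F_def by (auto simp: indicator_def)
    then show ?thesis unfolding V_def set_lebesgue_integral_def by simp
  qed
  have Vi: "set_integrable lborel {t..T} (V f)"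
    using lborel_pair.integrable_fst[OF Fint] unfolding inner_s set_integrable_def by simp
  then show "set_integrable lborel {t..T} (V f)" .
  have Ifi: "set_integrable lborel {t..T} (\<lambda>s. I s * f s)"
    using lborel_pair.integrable_snd[OF Fint] unfolding inner_u set_integrable_def by simp
  have fub: "(LINT s:{t..T}|lborel. I s * f s) = (LINT u:{t..T}|lborel. V f u)"
    using lborel_pair.Fubini_integral[OF Fint]
    unfolding inner_u inner_s set_lebesgue_integral_def by simp
  have fti: "set_integrable lborel {t..T} f"
    by (rule set_integrable_subset[OF fi]) (use t in auto)
  have Kti: "set_integrable lborel {t..T} (\<lambda>u. K u T)"
    by (rule borel_integrable_atLeastAtMost') 
       (auto simp: K_def intro!: continuous_intros continuous_on_compose2[OF W1_cont])
  have wI: "w (exp (- s + t)) * f s = f s - I s * f s" if "s \<in> {t..T}" for s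
  proof -
    have e: "w (exp (- s + t)) = 1 - I s" unfolding I_def using w_ftc[of t s] that by simp
    show ?thesis by (simp only: e left_diff_distrib mult_1)
  qed
  have "(LINT s:{t..T}|lborel. w (exp (- s + t)) * f s) = (LINT s:{t..T}|lborel. f s - I s * f s)"
    by (rule set_lebesgue_integral_cong) (use wI in auto)
  also have "\<dots> = (LINT s:{t..T}|lborel. f s) - (LINT u:{t..T}|lborel. V f u)"
    using set_integral_diff(2)[OF fti Ifi] fub by simp
  finally have 1: "(LINT s:{t..T}|lborel. w (exp (- s + t)) * f s) =
     (LINT s:{t..T}|lborel. f s) - (LINT u:{t..T}|lborel. V f u)" .
  have 2: "w (exp (- T + t)) = 1 - (LINT u:{t..T}|lborel. K u T)"
    using w_ftc[of t T] t by simp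
  have 3: "(LINT u:{t..T}|lborel. f u - K u T - V f u) =
     (LINT s:{t..T}|lborel. f s) - (LINT u:{t..T}|lborel. K u T) - (LINT u:{t..T}|lborel. V f u)"
    using set_integral_diff(2)[OF set_integral_diff(1)[OF fti Kti] Vi] set_integral_diff(2)[OF fti Kti]
    by simp
  show "w (exp (- T + t)) + (LINT s:{t..T}|lborel. w (exp (- s + t)) * f s)
       = 1 + (LINT u:{t..T}|lborel. f u - K u T - V f u)"
    using 1 2 3 by simp
qed


lemma exists_sol:
  "\<exists>f. f \<in> borel_measurable borel \<and> set_integrable lborel {0..T} f \<and> (\<forall>u\<in>{0..T}. f u = K u T + V f u)"
proof -
  obtain B where B: "B > 0" "\<And>u s. u \<le> s \<Longrightarrow> \<bar>K u s\<bar> \<le> B" using K_bound by blast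
  define Op where "Op g = (\<lambda>u. K u T + V g u)" for g
  define F where "F n = (Op ^^ n) (\<lambda>_. 0)" for n
  have F0: "F 0 = (\<lambda>_. 0)" unfolding F_def by simp
  have FS: "F (Suc n) = Op (F n)" for n unfolding F_def by simp
  have Fm[measurable]: "F n \<in> borel_measurable borel" for n
  proof (induction n)
    case 0 then show ?case by (simp add: F0)
  next
    case (Suc n)
    note [measurable] = Suc
    show ?case unfolding FS Op_def by measurable
  qed
  have Fb: "\<exists>M. \<forall>u\<in>{0..T}. \<bar>F n u\<bar> \<le> M" for n
  proof (induction n)
    case 0 then show ?case by (intro exI[of _ 0]) (simp add: F0)
  next
    case (Suc n)
    then obtain M where M: "\<And>u. u \<in> {0..T} \<Longrightarrow> \<bar>F n u\<bar> \<le> M" by blast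
    have "\<bar>F (Suc n) u\<bar> \<le> B + B * (M * T)" if u: "u \<in> {0..T}" for u
    proof -
      have "\<bar>V (F n) u\<bar> \<le> B * (LINT s:{u..T}|lborel. M)"
        by (rule V_bound[where B=B]) (use M u B in \<open>auto intro!: borel_integrable_atLeastAtMost'\<close>)
      also have "\<dots> = B * (M * (T - u))" using u by (simp add: set_integral_const)
      also have "\<dots> \<le> B * (M * T)"
      proof -
        have "0 \<le> M" using M[of T] Tpos by auto
        then show ?thesis using u B by (intro mult_left_mono) (auto intro!: mult_left_mono)
      qed
      finally have "\<bar>V (F n) u\<bar> \<le> B * (M * T)" .
      moreover have "\<bar>K u T\<bar> \<le> B" using B u by auto
      ultimately show ?thesis unfolding FS Op_def by simp
    qed
    then show ?case by blast
  qed
  have Fi: "set_integrable lborel {u..T} (F n)" if "u \<in> {0..T}" for u n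
  proof -
    obtain M where "\<forall>u\<in>{0..T}. \<bar>F n u\<bar> \<le> M" using Fb by blast
    then show ?thesis by (intro bdd_set_integrable[where M=M]) (use that in auto)
  qed
  define e where "e u = exp (2 * B * (T - u))" for u
  have e_ge: "1 \<le> e u" if "u \<le> T" for u unfolding e_def using that B by simp
  have e_le: "e u \<le> exp (2 * B * T)" if "0 \<le> u" for u unfolding e_def using that B by simp
  have ei: "set_integrable lborel {u..T} (\<lambda>s. c * e s)" for u c
    unfolding e_def by (intro borel_integrable_atLeastAtMost') (auto intro!: continuous_intros)
  have D: "\<forall>u\<in>{0..T}. \<bar>F (Suc n) u - F n u\<bar> \<le> B * (1/2)^n * e u" for n
  proof (induction n)
    case 0
    show ?case
    proof
      fix u assume u: "u \<in> {0..T}"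
      have "V (\<lambda>_. 0) u = 0" unfolding V_def by simp
      then have "\<bar>F (Suc 0) u - F 0 u\<bar> = \<bar>K u T\<bar>" unfolding FS F0 Op_def by simp
      also have "\<dots> \<le> B * 1" using B u by auto
      also have "\<dots> \<le> B * e u" using e_ge[of u] u B by (intro mult_left_mono) auto
      finally show "\<bar>F (Suc 0) u - F 0 u\<bar> \<le> B * (1/2)^0 * e u" by simp
    qed
  next
    case (Suc n)
    show ?case
    proof
      fix u assume u: "u \<in> {0..T}"
      have "F (Suc (Suc n)) u - F (Suc n) u = V (F (Suc n)) u - V (F n) u"
        unfolding FS[of "Suc n"] FS[of n] Op_def by simp
      also have "\<dots> = V (\<lambda>s. F (Suc n) s - F n s) u"
        by (rule V_diff) (use Fi u in auto)
      finally have eq: "F (Suc (Suc n)) u - F (Suc n) u = V (\<lambda>s. F (Suc n) s - F n s) u" .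
      have "\<bar>V (\<lambda>s. F (Suc n) s - F n s) u\<bar> \<le> B * (LINT s:{u..T}|lborel. B * (1/2)^n * e s)"
      proof (rule V_bound[where B=B])
        show "set_integrable lborel {u..T} (\<lambda>s. B * (1/2)^n * e s)" by (rule ei)
        fix s assume "s \<in> {u..T}"
        then show "\<bar>F (Suc n) s - F n s\<bar> \<le> B * (1/2)^n * e s" using Suc u by auto
      qed (use B in auto)
      also have "\<dots> = B * (B * (1/2)^n * ((e u - 1) / (2 * B)))"
        using exp_int[of u "2 * B"] u B unfolding e_def by simp
      also have "\<dots> \<le> B * (1/2)^(Suc n) * e u"
        using B by (simp add: field_simps)
      finally show "\<bar>F (Suc (Suc n)) u - F (Suc n) u\<bar> \<le> B * (1/2)^(Suc n) * e u" using eq by simp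
    qed
  qed
  have Fbd: "\<bar>F n u\<bar> \<le> 2 * B * e u * (1 - (1/2)^n)" if u: "u \<in> {0..T}" for n u
  proof (induction n)
    case 0 then show ?case by (simp add: F0)
  next
    case (Suc n)
    have "\<bar>F (Suc n) u\<bar> \<le> \<bar>F n u\<bar> + \<bar>F (Suc n) u - F n u\<bar>" by simp
    also have "\<dots> \<le> 2 * B * e u * (1 - (1/2)^n) + B * (1/2)^n * e u"
      using Suc D[of n] u by (intro add_mono) auto
    also have "\<dots> = 2 * B * e u * (1 - (1/2)^(Suc n))" by (simp add: field_simps)
    finally show ?case .
  qed
  define M0 where "M0 = 2 * B * exp (2 * B * T)"
  have FM0: "\<bar>F n u\<bar> \<le> M0" if u: "u \<in> {0..T}" for n u
  proof -
    have "\<bar>F n u\<bar> \<le> 2 * B * e u * (1 - (1/2)^n)" by (rule Fbd[OF u])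
    also have "\<dots> \<le> 2 * B * e u * 1" using B e_ge[of u] u by (intro mult_left_mono) auto
    also have "\<dots> \<le> M0" unfolding M0_def using e_le[of u] u B by auto
    finally show ?thesis .
  qed
  have Fconv: "convergent (\<lambda>n. F n u)" if u: "u \<in> {0..T}" for u
  proof -
    have sm: "summable (\<lambda>n. F (Suc n) u - F n u)"
    proof (rule summable_comparison_test')
      show "summable (\<lambda>n. B * e u * (1/2)^n)" by (intro summable_mult summable_geometric) simp
      show "norm (F (Suc n) u - F n u) \<le> B * e u * (1/2)^n" for n using D[of n] u by (simp add: mult_ac)
    qed
    have "(\<lambda>n. \<Sum>k<n. F (Suc k) u - F k u) \<longlonglongrightarrow> (\<Sum>k. F (Suc k) u - F k u)"
      by (rule summable_LIMSEQ[OF sm])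
    moreover have "(\<Sum>k<n. F (Suc k) u - F k u) = F n u" for n
      using sum_lessThan_telescope[of "\<lambda>k. F k u" n] by (simp add: F0)
    ultimately show ?thesis unfolding convergent_def by auto
  qed
  define f where "f u = lim (\<lambda>n. indicator {0..T} u * F n u)" for u
  have conv: "(\<lambda>n. indicator {0..T} u * F n u) \<longlonglongrightarrow> f u" for u
  proof (cases "u \<in> {0..T}")
    case True
    then show ?thesis unfolding f_def using Fconv[OF True]
      by (simp add: convergent_LIMSEQ_iff)
  next
    case False
    then show ?thesis unfolding f_def by (simp add: limI)
  qed
  have convF: "(\<lambda>n. F n u) \<longlonglongrightarrow> f u" if "u \<in> {0..T}" for u
    using conv[of u] that by simp
  have fm[measurable]: "f \<in> borel_measurable borel"
    by (rule borel_measurable_LIMSEQ_real[OF conv]) measurable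
  have fM0: "\<bar>f u\<bar> \<le> M0" if u: "u \<in> {0..T}" for u
  proof -
    have "(\<lambda>n. \<bar>F n u\<bar>) \<longlonglongrightarrow> \<bar>f u\<bar>" by (rule tendsto_rabs[OF convF[OF u]])
    then show ?thesis by (rule LIMSEQ_le_const2) (use FM0 u in auto)
  qed
  have fi: "set_integrable lborel {0..T} f"
    by (rule bdd_set_integrable[where M=M0]) (use fM0 in auto)
  have fxp: "f u = K u T + V f u" if u: "u \<in> {0..T}" for u
  proof -
    have l1: "(\<lambda>n. F (Suc n) u) \<longlonglongrightarrow> f u" using convF[OF u] by (rule LIMSEQ_Suc)
    have "(\<lambda>n. V (F n) u) \<longlonglongrightarrow> V f u"
      unfolding V_def set_lebesgue_integral_def
    proof (rule integral_dominated_convergence[where w="\<lambda>s. indicator {u..T} s * (B * M0)"])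
      show "(\<lambda>s. indicator {u..T} s *\<^sub>R (K u s * f s)) \<in> borel_measurable lborel"
        unfolding ind_Icc by measurable
      show "(\<lambda>s. indicator {u..T} s *\<^sub>R (K u s * F n s)) \<in> borel_measurable lborel" for n
        unfolding ind_Icc by measurable
      show "integrable lborel (\<lambda>s. indicator {u..T} s * (B * M0))"
        using borel_integrable_atLeastAtMost'[of u T "\<lambda>_. B * M0"] unfolding set_integrable_def by simp
      show "AE s in lborel. (\<lambda>n. indicator {u..T} s *\<^sub>R (K u s * F n s)) \<longlonglongrightarrow> indicator {u..T} s *\<^sub>R (K u s * f s)"
      proof (intro AE_I2)
        fix s
        show "(\<lambda>n. indicator {u..T} s *\<^sub>R (K u s * F n s)) \<longlonglongrightarrow> indicator {u..T} s *\<^sub>R (K u s * f s)"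
        proof (cases "s \<in> {u..T}")
          case True
          then have "s \<in> {0..T}" using u by auto
          then show ?thesis using True by (auto intro!: tendsto_mult convF)
        qed simp
      qed
      show "AE s in lborel. norm (indicator {u..T} s *\<^sub>R (K u s * F n s)) \<le> indicator {u..T} s * (B * M0)" for n
      proof (intro AE_I2)
        fix s
        show "norm (indicator {u..T} s *\<^sub>R (K u s * F n s)) \<le> indicator {u..T} s * (B * M0)"
        proof (cases "s \<in> {u..T}")
          case True
          then have "s \<in> {0..T}" using u by auto
          then have "\<bar>F n s\<bar> \<le> M0" by (rule FM0)
          moreover have "\<bar>K u s\<bar> \<le> B" using B True by auto
          ultimately show ?thesis using True by (auto simp: abs_mult intro!: mult_mono)
        qed simp
      qed
    qed
    then have l2: "(\<lambda>n. F (Suc n) u) \<longlonglongrightarrow> K u T + V f u"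
      unfolding FS Op_def by (intro tendsto_add tendsto_const)
    show ?thesis using LIMSEQ_unique[OF l1 l2] .
  qed
  show ?thesis using fm fi fxp by blast
qed

end

theorem lemma7:
  fixes w w1 w2 w3 :: "real \<Rightarrow> real" and T1 :: real
  assumes into: "w ` {0..1} \<subseteq> {0..1}"
    and mono: "strict_mono_on {0..1} w"
    and d1: "\<And>x. x \<in> {0..1} \<Longrightarrow> (w has_real_derivative w1 x) (at x within {0..1})"
    and d2: "\<And>x. x \<in> {0..1} \<Longrightarrow> (w1 has_real_derivative w2 x) (at x within {0..1})"
    and d3: "\<And>x. x \<in> {0..1} \<Longrightarrow> (w2 has_real_derivative w3 x) (at x within {0..1})"
    and w0: "w 0 = 0" and w1': "w 1 = 1"
    and dw0: "w1 0 > 1" and dw1: "w1 1 > 1"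
    and d3pos: "\<And>x. x \<in> {0..1} \<Longrightarrow> w3 x > 0"
    and T1: "T1 > 0"
  shows "\<exists>f :: real \<Rightarrow> real.
           set_integrable lborel {0..T1} f
         \<and> (\<forall>t\<in>{0..T1}. w (exp (- T1 + t)) + (LINT s:{t..T1}|lborel. w (exp (- s + t)) * f s) = 1)
         \<and> (\<forall>g :: real \<Rightarrow> real. set_integrable lborel {0..T1} g
               \<and> (\<forall>t\<in>{0..T1}. w (exp (- T1 + t)) + (LINT s:{t..T1}|lborel. w (exp (- s + t)) * g s) = 1)
               \<longrightarrow> (AE s in lborel. s \<in> {0..T1} \<longrightarrow> g s = f s))"
proof -
  have w1cont: "continuous_on {0..1} w1"
    unfolding continuous_on_eq_continuous_within using d2 DERIV_continuous by blast
  interpret volt w w1 T1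
    by unfold_locales (use T1 w1cont d1 w1' in auto)
  obtain f0 where f0m[measurable]: "f0 \<in> borel_measurable borel"
    and f0i: "set_integrable lborel {0..T1} f0" and f0fix: "\<And>u. u \<in> {0..T1} \<Longrightarrow> f0 u = K u T1 + V f0 u"
    using exists_sol by blast
  obtain B where B: "B > 0" "\<And>u s. u \<le> s \<Longrightarrow> \<bar>K u s\<bar> \<le> B" using K_bound by blast
  have f0eq: "\<forall>t\<in>{0..T1}. w (exp (- T1 + t)) + (LINT s:{t..T1}|lborel. w (exp (- s + t)) * f0 s) = 1"
  proof
    fix t assume t: "t \<in> {0..T1}"
    have "(LINT u:{t..T1}|lborel. f0 u - K u T1 - V f0 u) = (LINT u:{t..T1}|lborel. 0)"
      by (rule set_lebesgue_integral_cong) (use f0fix t in auto)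
    then show "w (exp (- T1 + t)) + (LINT s:{t..T1}|lborel. w (exp (- s + t)) * f0 s) = 1"
      using key(2)[OF f0m f0i t] by (simp add: set_lebesgue_integral_def)
  qed
  show ?thesis
  proof (intro exI[of _ f0] conjI allI impI)
    show "set_integrable lborel {0..T1} f0" by (rule f0i)
    show "\<forall>t\<in>{0..T1}. w (exp (- T1 + t)) + (LINT s:{t..T1}|lborel. w (exp (- s + t)) * f0 s) = 1"
      by (rule f0eq)
    fix g :: "real \<Rightarrow> real"
    assume g: "set_integrable lborel {0..T1} g \<and>
      (\<forall>t\<in>{0..T1}. w (exp (- T1 + t)) + (LINT s:{t..T1}|lborel. w (exp (- s + t)) * g s) = 1)"
    define g' where "g' s = indicator {0..T1} s * g s" for s
    have "integrable lborel (\<lambda>x. indicator {0..T1} x *\<^sub>R g x)"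
      using g unfolding set_integrable_def by blast
    then have g'm[measurable]: "g' \<in> borel_measurable borel"
      using borel_measurable_integrable unfolding g'_def by fastforce
    have g'i: "set_integrable lborel {0..T1} g'"
    proof -
      have "(\<lambda>x. indicator {0..T1} x *\<^sub>R g' x) = (\<lambda>x. indicator {0..T1} x *\<^sub>R g x)"
        unfolding g'_def by (auto simp: indicator_def)
      then show ?thesis using g unfolding set_integrable_def by simp
    qed
    have g'eq: "w (exp (- T1 + t)) + (LINT s:{t..T1}|lborel. w (exp (- s + t)) * g' s) = 1"
      if t: "t \<in> {0..T1}" for t
    proof -
      have "(LINT s:{t..T1}|lborel. w (exp (- s + t)) * g' s) = (LINT s:{t..T1}|lborel. w (exp (- s + t)) * g s)"
        by (rule set_lebesgue_integral_cong) (use t in \<open>auto simp: g'_def\<close>)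
      then show ?thesis using g t by simp
    qed
    define \<rho> where "\<rho> u = g' u - K u T1 - V g' u" for u
    have \<rho>m[measurable]: "\<rho> \<in> borel_measurable borel" unfolding \<rho>_def by measurable
    have Kti: "set_integrable lborel {0..T1} (\<lambda>u. K u T1)"
      by (rule borel_integrable_atLeastAtMost')
         (auto simp: K_def intro!: continuous_intros continuous_on_compose2[OF W1_cont])
    have \<rho>i: "set_integrable lborel {0..T1} \<rho>"
      unfolding \<rho>_def using T1
      by (intro set_integral_diff(1) g'i Kti key(1)[OF g'm g'i]) auto
    have z: "(LINT u:{t..T1}|lborel. \<rho> u) = 0" if t: "t \<in> {0..T1}" for t
      using key(2)[OF g'm g'i t] g'eq[OF t] unfolding \<rho>_def by simp
    have ae\<rho>: "AE u in lborel. u \<in> {0..T1} \<longrightarrow> \<rho> u = 0"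
      by (rule ae_zero_of_intervals[OF \<rho>m \<rho>i z]) (use T1 in auto)
    define h where "h u = g' u - f0 u" for u
    have hm[measurable]: "h \<in> borel_measurable borel" unfolding h_def by measurable
    have hi: "set_integrable lborel {0..T1} h" unfolding h_def by (rule set_integral_diff(1)[OF g'i f0i])
    have bnd: "AE u in lborel. u \<in> {0..T1} \<longrightarrow> \<bar>h u\<bar> \<le> B * (LINT s:{u..T1}|lborel. \<bar>h s\<bar>)"
      using ae\<rho>
    proof eventually_elim
      case (elim u)
      show ?case
      proof
        assume u: "u \<in> {0..T1}"
        have sub: "set_integrable lborel {u..T1} k" if "set_integrable lborel {0..T1} k" for k :: "real \<Rightarrow> real"
          by (rule set_integrable_subset[OF that]) (use u in auto)
        have "h u = V g' u - V f0 u"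
          using elim u f0fix[OF u] unfolding h_def \<rho>_def by simp
        also have "\<dots> = V h u" unfolding h_def
          by (rule V_diff) (use sub g'i f0i in auto)
        finally have "h u = V h u" .
        moreover have "\<bar>V h u\<bar> \<le> B * (LINT s:{u..T1}|lborel. \<bar>h s\<bar>)"
          by (rule V_bound[where B=B]) (use B sub[OF set_integrable_abs[OF hi]] in auto)
        ultimately show "\<bar>h u\<bar> \<le> B * (LINT s:{u..T1}|lborel. \<bar>h s\<bar>)" by simp
      qed
    qed
    have "AE u in lborel. u \<in> {0..T1} \<longrightarrow> h u = 0"
      by (rule gronwall_ae[OF hm hi B(1) _ bnd]) (use T1 in auto)
    then show "AE s in lborel. s \<in> {0..T1} \<longrightarrow> g s = f0 s"
      by eventually_elim (auto simp: h_def g'_def)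
  qed
qed

end
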